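(* Let $\mathcal E$ be a nest on a complex Banach space $X$ and let $\mathcal J$ be a $\mathcal T(\mathcal E)$-bimodule. Then $(\Phi_{\mathcal J},\Phi^e_{\mathcal J})$ is an admissible support function pair on $\mathcal E$.
   Context: A nest $\mathcal E$ on $X$ is a family of closed linear subspaces of $X$, totally ordered by inclusion, containing $\{0\}$ and $X$, closed under arbitrary meets $\wedge$ (intersections) and joins $\vee$ (norm-closed linear spans of unions). For $E\in\mathcal E$, $E_-=\vee\{F\in\mathcal E: F\subsetneq E\}$ and $E_+=\wedge\{F\in\mathcal E: E\subsetneq F\}$. $\mathcal T(\mathcal E)=\{T\in\mathcal B(X): TE\subseteq E\ \forall E\in\mathcal E\}$; a $\mathcal T(\mathcal E)$-bimodule is a linear subspace $\mathcal J\subseteq\mathcal B(X)$ with $\mathcal T(\mathcal E)\mathcal J,\mathcal J\mathcal T(\mathcal E)\subseteq\mathcal J$. For subspaces $M,L$ ($L$ closed), $M/L=\{m+L:m\in M\}$ and $\dim(M/L)$ is its dimension. A support function is an inclusion-preserving map $\mathcal E\to\mathcal E$; it is admissible if for all $N\neq\{0\}$, $\vee_{E\subsetneq N}\Phi(E)=\Phi(N_-)$. $\Phi\le\Theta$ means $\Phi(E)\subseteq\Theta(E)$ for all $E$. $\mathcal E_f=\{N\in\mathcal E: 0<\dim(N/N_-)<\infty\}$. An essential support function is a support function $\Psi$ such that for all $N,N_1,N_2\in\mathcal E$ with $N_1\subseteq N_2$: (a) $\Psi(N)\in\mathcal E_f\Rightarrow\Psi(N)=\Psi(N)_+$; (b)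 $\dim(N_2/N_1)<\infty\Rightarrow\Psi(N_2)=\Psi(N_1)$. A support function pair is a pair $(\Phi,\Psi)$ with $\Phi$ admissible, $\Phi(\{0\})=\{0\}$, $\Psi$ an essential support function and $\Psi\le\Phi$; it is admissible if moreover $\Psi(N)\in\mathcal E_f\Rightarrow\Psi(N)\subsetneq\Phi(N)$ for all $N\in\mathcal E$. For a bimodule $\mathcal J$: $\Phi_{\mathcal J}(E)=[\mathcal JE]$ (norm-closed linear span of $\{Tx:T\in\mathcal J,x\in E\}$), and $\Phi^e_{\mathcal J}(N)=\wedge\{L\in\mathcal E: \dim(TN/L)<\infty\ \forall T\in\mathcal J\}$. *)

theory Defs
  imports "HOL-Analysis.Analysis" "HOL-Library.Extended_Nat"
begin

text \<open>A complex Banach space is modelled as a real Banach space (type class banach)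
  together with a complex scalar multiplication sc extending the real one
  and compatible with the norm.\<close>

definition complex_structure :: "(complex \<Rightarrow> 'a::banach \<Rightarrow> 'a) \<Rightarrow> bool" where
  "complex_structure sc \<longleftrightarrow>
     (\<forall>r x. sc (complex_of_real r) x = r *\<^sub>R x) \<and>
     (\<forall>a x y. sc a (x + y) = sc a x + sc a y) \<and>
     (\<forall>a b x. sc (a + b) x = sc a x + sc b x) \<and>
     (\<forall>a b x. sc a (sc b x) = sc (a * b) x) \<and>
     (\<forall>x. sc 1 x = x) \<and>
     (\<forall>a x. norm (sc a x) = cmod a * norm x)"

definition csubspace :: "(complex \<Rightarrow> 'a::banach \<Rightarrow> 'a) \<Rightarrow> 'a set \<Rightarrow> bool" where
  "csubspace sc V \<longleftrightarrow> subspace V \<and> (\<forall>c x. x \<in> V \<longrightarrow> sc c x \<in> V)"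

definition cspan :: "(complex \<Rightarrow> 'a::banach \<Rightarrow> 'a) \<Rightarrow> 'a set \<Rightarrow> 'a set" where
  "cspan sc A = \<Inter>{V. csubspace sc V \<and> A \<subseteq> V}"

definition join :: "(complex \<Rightarrow> 'a::banach \<Rightarrow> 'a) \<Rightarrow> 'a set set \<Rightarrow> 'a set" where
  "join sc S = closure (cspan sc (\<Union>S))"

definition bounded_clinear_op :: "(complex \<Rightarrow> 'a::banach \<Rightarrow> 'a) \<Rightarrow> ('a \<Rightarrow> 'a) \<Rightarrow> bool" where
  "bounded_clinear_op sc T \<longleftrightarrow> bounded_linear T \<and> (\<forall>c x. T (sc c x) = sc c (T x))"

definition nest :: "(complex \<Rightarrow> 'a::banach \<Rightarrow> 'a) \<Rightarrow> 'a set set \<Rightarrow> bool" where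
  "nest sc \<E> \<longleftrightarrow>
     (\<forall>E\<in>\<E>. closed E \<and> csubspace sc E) \<and>
     (\<forall>E\<in>\<E>. \<forall>F\<in>\<E>. E \<subseteq> F \<or> F \<subseteq> E) \<and>
     {0} \<in> \<E> \<and> UNIV \<in> \<E> \<and>
     (\<forall>S. S \<subseteq> \<E> \<longrightarrow> \<Inter>S \<in> \<E>) \<and>
     (\<forall>S. S \<subseteq> \<E> \<longrightarrow> join sc S \<in> \<E>)"

definition minus_elem :: "(complex \<Rightarrow> 'a::banach \<Rightarrow> 'a) \<Rightarrow> 'a set set \<Rightarrow> 'a set \<Rightarrow> 'a set" where
  "minus_elem sc \<E> E = join sc {F\<in>\<E>. F \<subset> E}"

definition plus_elem :: "'a set set \<Rightarrow> 'a set \<Rightarrow> 'a set" where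
  "plus_elem \<E> E = \<Inter>{F\<in>\<E>. E \<subset> F}"

text \<open>Dimension of M/L = {m + L : m \<in> M} (L a closed subspace): the least number of
  vectors of M whose classes span M/L, i.e. the least card F, F \<subseteq> M finite,
  with M \<subseteq> cspan (F \<union> L); infinite if no such finite F exists.\<close>
definition qdim :: "(complex \<Rightarrow> 'a::banach \<Rightarrow> 'a) \<Rightarrow> 'a set \<Rightarrow> 'a set \<Rightarrow> enat" where
  "qdim sc M L =
     (if \<exists>F. finite F \<and> F \<subseteq> M \<and> M \<subseteq> cspan sc (F \<union> L)
      then enat (LEAST n. \<exists>F. finite F \<and> F \<subseteq> M \<and> M \<subseteq> cspan sc (F \<union> L) \<and> card F = n)
      else \<infinity>)"

definition nest_alg :: "(complex \<Rightarrow> 'a::banach \<Rightarrow> 'a) \<Rightarrow> 'a set set \<Rightarrow> ('a \<Rightarrow> 'a) set" where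
  "nest_alg sc \<E> = {T. bounded_clinear_op sc T \<and> (\<forall>E\<in>\<E>. T ` E \<subseteq> E)}"

definition bimodule :: "(complex \<Rightarrow> 'a::banach \<Rightarrow> 'a) \<Rightarrow> 'a set set \<Rightarrow> ('a \<Rightarrow> 'a) set \<Rightarrow> bool" where
  "bimodule sc \<E> J \<longleftrightarrow>
     J \<subseteq> {T. bounded_clinear_op sc T} \<and>
     (\<lambda>x. 0) \<in> J \<and>
     (\<forall>S\<in>J. \<forall>T\<in>J. (\<lambda>x. S x + T x) \<in> J) \<and>
     (\<forall>c. \<forall>T\<in>J. (\<lambda>x. sc c (T x)) \<in> J) \<and>
     (\<forall>A\<in>nest_alg sc \<E>. \<forall>T\<in>J. A \<circ> T \<in> J \<and> T \<circ> A \<in> J)"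

definition support_function :: "'a set set \<Rightarrow> ('a set \<Rightarrow> 'a set) \<Rightarrow> bool" where
  "support_function \<E> \<Phi> \<longleftrightarrow>
     (\<forall>E\<in>\<E>. \<Phi> E \<in> \<E>) \<and> (\<forall>E\<in>\<E>. \<forall>F\<in>\<E>. E \<subseteq> F \<longrightarrow> \<Phi> E \<subseteq> \<Phi> F)"

definition admissible_sf :: "(complex \<Rightarrow> 'a::banach \<Rightarrow> 'a) \<Rightarrow> 'a set set \<Rightarrow> ('a set \<Rightarrow> 'a set) \<Rightarrow> bool" where
  "admissible_sf sc \<E> \<Phi> \<longleftrightarrow> support_function \<E> \<Phi> \<and>
     (\<forall>N\<in>\<E>. N \<noteq> {0} \<longrightarrow> join sc (\<Phi> ` {E\<in>\<E>. E \<subset> N}) = \<Phi> (minus_elem sc \<E> N))"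

definition sf_le :: "'a set set \<Rightarrow> ('a set \<Rightarrow> 'a set) \<Rightarrow> ('a set \<Rightarrow> 'a set) \<Rightarrow> bool" where
  "sf_le \<E> \<Phi> \<Theta> \<longleftrightarrow> (\<forall>E\<in>\<E>. \<Phi> E \<subseteq> \<Theta> E)"

definition E_f :: "(complex \<Rightarrow> 'a::banach \<Rightarrow> 'a) \<Rightarrow> 'a set set \<Rightarrow> 'a set set" where
  "E_f sc \<E> = {N\<in>\<E>. 0 < qdim sc N (minus_elem sc \<E> N) \<and> qdim sc N (minus_elem sc \<E> N) < \<infinity>}"

definition essential_sf :: "(complex \<Rightarrow> 'a::banach \<Rightarrow> 'a) \<Rightarrow> 'a set set \<Rightarrow> ('a set \<Rightarrow> 'a set) \<Rightarrow> bool" where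
  "essential_sf sc \<E> \<Psi> \<longleftrightarrow> support_function \<E> \<Psi> \<and>
     (\<forall>N\<in>\<E>. \<Psi> N \<in> E_f sc \<E> \<longrightarrow> \<Psi> N = plus_elem \<E> (\<Psi> N)) \<and>
     (\<forall>N1\<in>\<E>. \<forall>N2\<in>\<E>. N1 \<subseteq> N2 \<longrightarrow> qdim sc N2 N1 < \<infinity> \<longrightarrow> \<Psi> N2 = \<Psi> N1)"

definition sf_pair :: "(complex \<Rightarrow> 'a::banach \<Rightarrow> 'a) \<Rightarrow> 'a set set \<Rightarrow> ('a set \<Rightarrow> 'a set) \<Rightarrow> ('a set \<Rightarrow> 'a set) \<Rightarrow> bool" where
  "sf_pair sc \<E> \<Phi> \<Psi> \<longleftrightarrow> admissible_sf sc \<E> \<Phi> \<and> \<Phi> {0} = {0} \<and> essential_sf sc \<E> \<Psi> \<and> sf_le \<E> \<Psi> \<Phi>"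

definition admissible_sf_pair :: "(complex \<Rightarrow> 'a::banach \<Rightarrow> 'a) \<Rightarrow> 'a set set \<Rightarrow> ('a set \<Rightarrow> 'a set) \<Rightarrow> ('a set \<Rightarrow> 'a set) \<Rightarrow> bool" where
  "admissible_sf_pair sc \<E> \<Phi> \<Psi> \<longleftrightarrow> sf_pair sc \<E> \<Phi> \<Psi> \<and>
     (\<forall>N\<in>\<E>. \<Psi> N \<in> E_f sc \<E> \<longrightarrow> \<Psi> N \<subset> \<Phi> N)"

definition Phi_J :: "(complex \<Rightarrow> 'a::banach \<Rightarrow> 'a) \<Rightarrow> ('a \<Rightarrow> 'a) set \<Rightarrow> 'a set \<Rightarrow> 'a set" where
  "Phi_J sc J E = closure (cspan sc {T x | T x. T \<in> J \<and> x \<in> E})"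

definition Phi_e_J :: "(complex \<Rightarrow> 'a::banach \<Rightarrow> 'a) \<Rightarrow> 'a set set \<Rightarrow> ('a \<Rightarrow> 'a) set \<Rightarrow> 'a set \<Rightarrow> 'a set" where
  "Phi_e_J sc \<E> J N = \<Inter>{L\<in>\<E>. \<forall>T\<in>J. qdim sc (T ` N) L < \<infinity>}"

end

theory Submission
  imports Defs
begin

lemma infdist_glb:
  assumes "A \<noteq> {}" "\<And>a. a \<in> A \<Longrightarrow> \<delta> \<le> dist x a"
  shows "\<delta> \<le> infdist x A"
  using assms by (simp add: infdist_notempty cINF_greatest)

lemma infdist_translate:
  fixes b f1 :: "'a::real_normed_vector"
  assumes "subspace F" "f1 \<in> F"
  shows "infdist (b + f1) F \<le> infdist b F"
proof -
  have ne: "F \<noteq> {}" using assms(1) subspace_0 by blast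
  have "infdist (b + f1) F \<le> dist b f" if "f \<in> F" for f
  proof -
    have "f + f1 \<in> F" using assms that subspace_add by blast
    hence "infdist (b + f1) F \<le> dist (b+f1) (f + f1)" by (rule infdist_le)
    also have "\<dots> = dist b f" unfolding dist_norm by (simp add: algebra_simps)
    finally show ?thesis .
  qed
  thus ?thesis using infdist_glb[OF ne] by blast
qed

lemma infdist_subadd:
  fixes a b :: "'a::real_normed_vector"
  assumes "subspace F"
  shows "infdist (a + b) F \<le> infdist a F + infdist b F"
proof -
  have ne: "F \<noteq> {}" using assms(1) subspace_0 by blast
  have "infdist (a + b) F - infdist b F \<le> dist a f" if "f \<in> F" for f
  proof -
    have "infdist (a + b) F \<le> infdist (b + f) F + dist (a+b) (b+f)" by (rule infdist_triangle)
    also have "\<dots> \<le> infdist b F + dist a f"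
    proof -
      have "dist (a+b) (b+f) = dist a f" unfolding dist_norm by (simp add: algebra_simps)
      thus ?thesis using infdist_translate[OF assms that, of b] by simp
    qed
    finally show ?thesis by simp
  qed
  hence "infdist (a + b) F - infdist b F \<le> infdist a F" using infdist_glb[OF ne] by blast
  thus ?thesis by simp
qed

lemma infdist_scale_le:
  fixes a :: "'a::real_normed_vector"
  assumes "subspace F" "t > 0"
  shows "infdist (t *\<^sub>R a) F \<le> t * infdist a F"
proof -
  have ne: "F \<noteq> {}" using assms(1) subspace_0 by blast
  have "infdist (t *\<^sub>R a) F / t \<le> dist a f" if "f \<in> F" for f
  proof -
    have "t *\<^sub>R f \<in> F" using assms(1) that subspace_scale by blast
    hence "infdist (t *\<^sub>R a) F \<le> dist (t *\<^sub>R a) (t *\<^sub>R f)" by (rule infdist_le)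
    also have "\<dots> = t * dist a f" using assms(2)
      by (simp add: dist_norm scaleR_diff_right[symmetric] del: scaleR_diff_right)
    finally show ?thesis using assms(2) by (simp add: divide_simps mult.commute)
  qed
  hence "infdist (t *\<^sub>R a) F / t \<le> infdist a F" using infdist_glb[OF ne] by blast
  thus ?thesis using assms(2) by (simp add: divide_simps mult.commute)
qed

lemma infdist_scale:
  fixes a :: "'a::real_normed_vector"
  assumes "subspace F" "t > 0"
  shows "infdist (t *\<^sub>R a) F = t * infdist a F"
proof -
  have "infdist ((1/t) *\<^sub>R (t *\<^sub>R a)) F \<le> (1/t) * infdist (t *\<^sub>R a) F"
    using assms by (intro infdist_scale_le) auto
  hence "t * infdist a F \<le> infdist (t *\<^sub>R a) F" using assms(2) by (simp add: divide_simps mult.commute)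
  thus ?thesis using infdist_scale_le[OF assms, of a] by simp
qed

lemma real_HB:
  fixes F :: "'a::real_normed_vector set" and x :: 'a
  assumes sF: "subspace F" and cF: "closed F" and xF: "x \<notin> F"
  shows "\<exists>g::'a\<Rightarrow>real. (\<forall>a b. g (a+b) = g a + g b) \<and> (\<forall>r a. g (r *\<^sub>R a) = r * g a)
     \<and> (\<forall>f\<in>F. g f = 0) \<and> g x \<noteq> 0 \<and> (\<forall>z. \<bar>g z\<bar> \<le> norm z)"
proof -
  define p where "p z = infdist z F" for z
  have ne: "F \<noteq> {}" using sF subspace_0 by blast
  have p_add: "p (a + b) \<le> p a + p b" for a b unfolding p_def by (rule infdist_subadd[OF sF])
  have p_scale: "p (t *\<^sub>R a) = t * p a" if "t > 0" for t a unfolding p_def by (rule infdist_scale[OF sF that])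
  have p_nonneg: "0 \<le> p a" for a unfolding p_def by (rule infdist_nonneg)
  have p_F: "p f = 0" if "f \<in> F" for f unfolding p_def using that by simp
  have p_norm: "p z \<le> norm z" for z
  proof -
    have "p z \<le> dist z 0" unfolding p_def using sF subspace_0 by (intro infdist_le) auto
    thus ?thesis by simp
  qed
  define d where "d = p x"
  have dpos: "d > 0" unfolding d_def p_def using infdist_pos_not_in_closed[OF cF ne xF] .
  have x0: "x \<noteq> 0" using xF sF subspace_0 by blast
  define good where "good G \<longleftrightarrow> (\<forall>a u v. (a,u)\<in>G \<longrightarrow> (a,v)\<in>G \<longrightarrow> u=v) \<and>
     (\<forall>a u b v. (a,u)\<in>G \<longrightarrow> (b,v)\<in>G \<longrightarrow> (a+b,u+v)\<in>G) \<and>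
     (\<forall>a u r. (a,u)\<in>G \<longrightarrow> (r *\<^sub>R a, r*u)\<in>G) \<and>
     (\<forall>a u. (a,u)\<in>G \<longrightarrow> u \<le> p a) \<and> (x,d)\<in>G" for G :: "('a \<times> real) set"
  define G0 where "G0 = range (\<lambda>t. (t *\<^sub>R x, t * d))"
  have goodG0: "good G0"
  proof -
    have "u = v" if "(a,u)\<in>G0" "(a,v)\<in>G0" for a u v
    proof -
      obtain t where t: "a = t *\<^sub>R x" "u = t*d" using \<open>(a,u)\<in>G0\<close> unfolding G0_def by auto
      obtain s where s: "a = s *\<^sub>R x" "v = s * d" using \<open>(a,v)\<in>G0\<close> unfolding G0_def by auto
      have "t = s" using t s x0 by (metis scaleR_cancel_right)
      thus ?thesis using t s by simp
    qed
    moreover have "(a+b,u+v)\<in>G0" if h1: "(a,u)\<in>G0" and h2: "(b,v)\<in>G0" for a u b v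
    proof -
      obtain t where "a = t *\<^sub>R x" "u = t*d" using h1 unfolding G0_def by auto
      moreover obtain s where "b = s *\<^sub>R x" "v = s * d" using h2 unfolding G0_def by auto
      ultimately
      show ?thesis unfolding G0_def by (auto simp: image_iff scaleR_add_left[symmetric] distrib_right intro!: exI[of _ "t+s"])
    qed
    moreover have "(r *\<^sub>R a, r*u)\<in>G0" if h1: "(a,u)\<in>G0" for a u r
    proof -
      obtain t where "a = t *\<^sub>R x" "u = t*d" using h1 unfolding G0_def by auto
      thus ?thesis unfolding G0_def by (auto simp: image_iff intro!: exI[of _ "r*t"])
    qed
    moreover have "u \<le> p a" if h1: "(a,u)\<in>G0" for a u
    proof -
      obtain t where t: "a = t *\<^sub>R x" "u = t*d" using h1 unfolding G0_def by auto
      show ?thesis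
      proof (cases "t > 0")
        case True thus ?thesis using t p_scale[OF True, of x] d_def by simp
      next
        case False thus ?thesis using t dpos p_nonneg[of a] by (smt (verit) mult_nonpos_nonneg)
      qed
    qed
    moreover have "(x,d)\<in>G0" unfolding G0_def by (auto simp: image_iff intro!: exI[of _ 1])
    ultimately show ?thesis unfolding good_def by blast
  qed
  have "\<exists>M\<in>{G. good G}. \<forall>X\<in>{G. good G}. M \<subseteq> X \<longrightarrow> X = M"
  proof (rule subset_Zorn_nonempty)
    show "{G. good G} \<noteq> {}" using goodG0 by blast
  next
    fix C assume Cne: "C \<noteq> {}" and ch: "subset.chain {G. good G} C"
    have Cg: "\<And>G. G \<in> C \<Longrightarrow> good G" and tot: "\<And>X Y. X\<in>C \<Longrightarrow> Y\<in>C \<Longrightarrow> X \<subseteq> Y \<or> Y \<subseteq> X"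
      using ch by (auto simp: subset_chain_def)
    have two: "\<exists>G\<in>C. (a,u)\<in>G \<and> (b,v)\<in>G" if "(a,u)\<in>\<Union>C" "(b,v)\<in>\<Union>C" for a u b v
      using that tot by blast
    have "good (\<Union>C)" unfolding good_def
    proof (intro conjI allI impI)
      fix a u v assume "(a,u)\<in>\<Union>C" "(a,v)\<in>\<Union>C"
      then obtain G where "G\<in>C" "(a,u)\<in>G" "(a,v)\<in>G" using two by blast
      thus "u = v" using Cg unfolding good_def by blast
    next
      fix a u b v assume "(a,u)\<in>\<Union>C" "(b,v)\<in>\<Union>C"
      then obtain G where "G\<in>C" "(a,u)\<in>G" "(b,v)\<in>G" using two by blast
      thus "(a+b,u+v)\<in>\<Union>C" using Cg unfolding good_def by blast
    next
      fix a u r assume "(a,u)\<in>\<Union>C"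
      then obtain G where "G\<in>C" "(a,u)\<in>G" by blast
      thus "(r *\<^sub>R a, r*u)\<in>\<Union>C" using Cg unfolding good_def by blast
    next
      fix a u assume "(a,u)\<in>\<Union>C"
      then obtain G where "G\<in>C" "(a,u)\<in>G" by blast
      thus "u \<le> p a" using Cg unfolding good_def by blast
    next
      obtain G where "G \<in> C" using Cne by blast
      thus "(x,d)\<in>\<Union>C" using Cg unfolding good_def by blast
    qed
    thus "\<Union>C \<in> {G. good G}" by simp
  qed
  then obtain M where gM: "good M" and maxM: "\<And>X. good X \<Longrightarrow> M \<subseteq> X \<Longrightarrow> X = M" by blast
  have Msv: "\<And>a u v. (a,u)\<in>M \<Longrightarrow> (a,v)\<in>M \<Longrightarrow> u=v"
   and Madd: "\<And>a u b v. (a,u)\<in>M \<Longrightarrow> (b,v)\<in>M \<Longrightarrow> (a+b,u+v)\<in>M"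
   and Mscale: "\<And>a u r. (a,u)\<in>M \<Longrightarrow> (r *\<^sub>R a, r*u)\<in>M"
   and Mp: "\<And>a u. (a,u)\<in>M \<Longrightarrow> u \<le> p a" and Mx: "(x,d)\<in>M"
    using gM unfolding good_def by blast+
  have total: "\<exists>u. (z,u) \<in> M" for z
  proof (rule ccontr)
    assume nz: "\<nexists>u. (z,u) \<in> M"
    define S where "S = {u - p (a - z) | a u. (a,u)\<in>M}"
    define c where "c = Sup S"
    have Sne: "S \<noteq> {}" using Mx unfolding S_def by blast
    have Sbd: "s \<le> p (b + z) - v" if hs: "s \<in> S" and hb: "(b,v)\<in>M" for s b v
    proof -
      obtain a u where au: "(a,u)\<in>M" "s = u - p (a - z)" using hs unfolding S_def by blast
      have "u + v \<le> p (a + b)" using Mp[OF Madd[OF au(1) hb]] .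
      also have "\<dots> \<le> p (a - z) + p (b + z)" using p_add[of "a - z" "b + z"] by (simp add: algebra_simps)
      finally show ?thesis using au by simp
    qed
    have c_ge: "u - p (a - z) \<le> c" if "(a,u)\<in>M" for a u
    proof -
      have "bdd_above S" unfolding bdd_above_def using Sbd[OF _ Mx] by blast
      moreover have "u - p (a - z) \<in> S" unfolding S_def using that by blast
      ultimately show ?thesis unfolding c_def by (rule cSup_upper[rotated])
    qed
    have c_le: "c \<le> p (b + z) - v" if "(b,v)\<in>M" for b v
      unfolding c_def using Sne Sbd that by (intro cSup_least) auto
    define G' where "G' = {(a + t *\<^sub>R z, u + t * c) | a u t. (a,u)\<in>M}"
    have MG': "M \<subseteq> G'" unfolding G'_def by force
    have neg: "(-a, -u) \<in> M" if "(a,u)\<in>M" for a u using Mscale[OF that, of "-1"] by simp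
    have "good G'" unfolding good_def
    proof (intro conjI allI impI)
      fix a v w assume "(a,v)\<in>G'" "(a,w)\<in>G'"
      then obtain a1 u1 t1 a2 u2 t2 where e: "(a1,u1)\<in>M" "a = a1 + t1 *\<^sub>R z" "v = u1 + t1*c"
        "(a2,u2)\<in>M" "a = a2 + t2 *\<^sub>R z" "w = u2 + t2*c" unfolding G'_def by blast
      have "t1 = t2"
      proof (rule ccontr)
        assume ne: "t1 \<noteq> t2"
        have "(a2 + - a1, u2 + - u1) \<in> M" using Madd[OF e(4) neg[OF e(1)]] .
        hence "((1/(t1 - t2)) *\<^sub>R (a2 + - a1), (1/(t1-t2)) * (u2 + - u1)) \<in> M" by (rule Mscale)
        moreover have "(1/(t1 - t2)) *\<^sub>R (a2 + - a1) = z"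
        proof -
          have "a2 - a1 = (t1 - t2) *\<^sub>R z" using e(2) e(5) by (simp add: algebra_simps)
          thus ?thesis using ne by simp
        qed
        ultimately show False using nz by auto
      qed
      hence "a1 = a2" using e by simp
      hence "u1 = u2" using Msv e by blast
      thus "v = w" using e \<open>t1 = t2\<close> by simp
    next
      fix a v b w assume "(a,v)\<in>G'" "(b,w)\<in>G'"
      then obtain a1 u1 t1 a2 u2 t2 where e: "(a1,u1)\<in>M" "a = a1 + t1 *\<^sub>R z" "v = u1 + t1*c"
        "(a2,u2)\<in>M" "b = a2 + t2 *\<^sub>R z" "w = u2 + t2*c" unfolding G'_def by blast
      have "(a1+a2, u1+u2) \<in> M" using Madd e by blast
      moreover have "a + b = (a1 + a2) + (t1+t2) *\<^sub>R z" "v + w = (u1+u2) + (t1+t2)*c"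
        using e by (simp_all add: algebra_simps)
      ultimately show "(a+b, v+w) \<in> G'" unfolding G'_def by blast
    next
      fix a v r assume "(a,v)\<in>G'"
      then obtain a1 u1 t1 where e: "(a1,u1)\<in>M" "a = a1 + t1 *\<^sub>R z" "v = u1 + t1*c"
        unfolding G'_def by blast
      have "(r *\<^sub>R a1, r*u1) \<in> M" using Mscale e by blast
      moreover have "r *\<^sub>R a = r *\<^sub>R a1 + (r*t1) *\<^sub>R z" "r * v = r*u1 + (r*t1)*c"
        using e by (simp_all add: algebra_simps)
      ultimately show "(r *\<^sub>R a, r * v) \<in> G'" unfolding G'_def by blast
    next
      fix a v assume "(a,v)\<in>G'"
      then obtain a1 u1 t where e: "(a1,u1)\<in>M" "a = a1 + t *\<^sub>R z" "v = u1 + t*c"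
        unfolding G'_def by blast
      show "v \<le> p a"
      proof (cases "t = 0")
        case True thus ?thesis using e Mp by simp
      next
        case False
        show ?thesis
        proof (cases "t > 0")
          case tp: True
          have m: "((1/t) *\<^sub>R a1, (1/t)*u1) \<in> M" using Mscale e(1) by blast
          have "c \<le> p ((1/t) *\<^sub>R a1 + z) - (1/t)*u1" using c_le[OF m] .
          hence "t * c \<le> t * p ((1/t) *\<^sub>R a1 + z) - u1" using tp by (simp add: algebra_simps divide_simps)
          also have "t * p ((1/t) *\<^sub>R a1 + z) = p (t *\<^sub>R ((1/t) *\<^sub>R a1 + z))" using p_scale[OF tp] by simp
          also have "t *\<^sub>R ((1/t) *\<^sub>R a1 + z) = a" using e tp by (simp add: algebra_simps)
          finally show ?thesis using e by simp
        next
          case tn: False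
          define s where "s = -t"
          have sp: "s > 0" using tn False s_def by simp
          have m: "((1/s) *\<^sub>R a1, (1/s)*u1) \<in> M" using Mscale e(1) by blast
          have "(1/s)*u1 - p ((1/s) *\<^sub>R a1 - z) \<le> c" using c_ge[OF m] .
          hence "u1 - s * p ((1/s) *\<^sub>R a1 - z) \<le> s * c" using sp by (simp add: algebra_simps divide_simps)
          also have "s * p ((1/s) *\<^sub>R a1 - z) = p (s *\<^sub>R ((1/s) *\<^sub>R a1 - z))" using p_scale[OF sp] by simp
          also have "s *\<^sub>R ((1/s) *\<^sub>R a1 - z) = a" using e sp s_def by (simp add: algebra_simps)
          finally show ?thesis using e s_def by (simp add: algebra_simps)
        qed
      qed
    next
      show "(x,d) \<in> G'" using MG' Mx by blast
    qed
    hence "G' = M" using maxM MG' by blast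
    moreover have "(0,0) \<in> M" using Mscale[OF Mx, of 0] by simp
    ultimately have "(0 + 1 *\<^sub>R z, 0 + 1*c) \<in> M" unfolding G'_def by blast
    thus False using nz by simp
  qed
  define g where "g z = (THE u. (z,u) \<in> M)" for z
  have gM': "(z, g z) \<in> M" for z
  proof -
    obtain u where u: "(z,u)\<in>M" using total by blast
    hence "g z = u" unfolding g_def using Msv by blast
    thus ?thesis using u by simp
  qed
  have gval: "g z = u" if "(z,u)\<in>M" for z u using Msv[OF that gM'] by simp
  have gadd: "g (a+b) = g a + g b" for a b using gval[OF Madd[OF gM' gM']] .
  have gscale: "g (r *\<^sub>R a) = r * g a" for r a using gval[OF Mscale[OF gM']] .
  have gp: "g z \<le> p z" for z using Mp[OF gM'] .
  have gneg: "g (-z) = - g z" for z using gscale[of "-1" z] by simp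
  have "\<forall>f\<in>F. g f = 0"
  proof
    fix f assume f: "f \<in> F"
    have "-f \<in> F" using sF f subspace_neg by blast
    thus "g f = 0" using gp[of f] gp[of "-f"] p_F f gneg[of f] by force
  qed
  moreover have "g x \<noteq> 0" using gval[OF Mx] dpos by simp
  moreover have "\<bar>g z\<bar> \<le> norm z" for z
    using gp[of z] gp[of "-z"] gneg[of z] p_norm[of z] p_norm[of "-z"] by (simp add: abs_le_iff)
  ultimately show ?thesis using gadd gscale by blast
qed

lemma cs_facts:
  assumes "complex_structure sc"
  shows cs_real: "sc (complex_of_real r) x = r *\<^sub>R x"
    and cs_add: "sc a (x + y) = sc a x + sc a y"
    and cs_addl: "sc (a + b) x = sc a x + sc b x"
    and cs_mult: "sc a (sc b x) = sc (a * b) x"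
    and cs_one: "sc 1 x = x"
    and cs_norm: "norm (sc a x) = cmod a * norm x"
  using assms unfolding complex_structure_def by auto

lemma cs_zero: "complex_structure sc \<Longrightarrow> sc a 0 = 0"
  using cs_add[of sc a 0 0] by simp

lemma cs_zero_left: "complex_structure sc \<Longrightarrow> sc 0 x = 0"
  using cs_real[of sc 0 x] by simp

lemma cs_scaleR: "complex_structure sc \<Longrightarrow> sc a (r *\<^sub>R x) = r *\<^sub>R sc a x"
  by (metis cs_mult cs_real mult.commute)

lemma cs_bl: "complex_structure sc \<Longrightarrow> bounded_linear (sc a)"
  by (rule bounded_linear_intro[where K="cmod a"]) (auto simp: cs_add cs_scaleR cs_norm mult.commute)

lemma cs_minus: "complex_structure sc \<Longrightarrow> sc a (- x) = - sc a x"
  using cs_scaleR[of sc a "-1" x] by simp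

lemma cs_diff: "complex_structure sc \<Longrightarrow> sc a (x - y) = sc a x - sc a y"
  using cs_add[of sc a x "-y"] cs_minus[of sc a y] by simp

lemma cs_Complex: "complex_structure sc \<Longrightarrow> sc (Complex a b) z = a *\<^sub>R z + b *\<^sub>R sc \<i> z"
proof -
  assume cs: "complex_structure sc"
  have "Complex a b = complex_of_real a + complex_of_real b * \<i>" by (simp add: Complex_eq)
  hence "sc (Complex a b) z = sc (complex_of_real a) z + sc (complex_of_real b) (sc \<i> z)"
    using cs by (simp add: cs_addl cs_mult)
  thus ?thesis using cs by (simp add: cs_real)
qed

lemma complex_HB:
  fixes F :: "'a::banach set"
  assumes cs: "complex_structure sc" and cF: "closed F" and sF: "csubspace sc F" and xF: "x \<notin> F"
  shows "\<exists>f::'a\<Rightarrow>complex. (\<forall>a b. f (a+b) = f a + f b) \<and> (\<forall>c a. f (sc c a) = c * f a)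
     \<and> (\<forall>y\<in>F. f y = 0) \<and> f x \<noteq> 0 \<and> (\<forall>z. cmod (f z) \<le> 2 * norm z)"
proof -
  have sF': "subspace F" using sF unfolding csubspace_def by blast
  obtain g :: "'a \<Rightarrow> real" where gadd: "\<And>a b. g (a+b) = g a + g b" and gsc: "\<And>r a. g (r *\<^sub>R a) = r * g a"
    and gF: "\<And>y. y\<in>F \<Longrightarrow> g y = 0" and gx: "g x \<noteq> 0" and gb: "\<And>z. \<bar>g z\<bar> \<le> norm z"
    using real_HB[OF sF' cF xF] by blast
  define f where "f z = Complex (g z) (- g (sc \<i> z))" for z
  have gC: "g (sc (Complex a b) z) = a * g z + b * g (sc \<i> z)" for a b z
    using cs by (simp add: cs_Complex gadd gsc)
  have "f (a+b) = f a + f b" for a b unfolding f_def using cs by (simp add: gadd cs_add complex_eq_iff)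
  moreover have "f (sc c a) = c * f a" for c a
  proof -
    obtain r s where c: "c = Complex r s" by (cases c) auto
    have "\<i> * c = Complex (-s) r" using c by (simp add: complex_eq_iff)
    hence e: "sc \<i> (sc c a) = sc (Complex (-s) r) a" using cs by (simp add: cs_mult)
    show ?thesis unfolding f_def e unfolding c gC by (simp add: complex_eq_iff algebra_simps)
  qed
  moreover have "f y = 0" if "y \<in> F" for y
  proof -
    have "sc \<i> y \<in> F" using sF that unfolding csubspace_def by blast
    thus ?thesis unfolding f_def using gF that by (simp add: complex_eq_iff)
  qed
  moreover have "f x \<noteq> 0" unfolding f_def using gx by (simp add: complex_eq_iff)
  moreover have "cmod (f z) \<le> 2 * norm z" for z
  proof -
    have "cmod (f z) \<le> \<bar>g z\<bar> + \<bar>g (sc \<i> z)\<bar>" unfolding f_def using cmod_le[of "Complex (g z) (- g (sc \<i> z))"] by simp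
    also have "\<dots> \<le> norm z + norm (sc \<i> z)" using gb[of z] gb[of "sc \<i> z"] by simp
    also have "norm (sc \<i> z) = norm z" using cs by (simp add: cs_norm)
    finally show ?thesis by simp
  qed
  ultimately show ?thesis by blast
qed

lemma csubspaceI:
  assumes "0 \<in> V" "\<And>x y. x\<in>V \<Longrightarrow> y\<in>V \<Longrightarrow> x+y\<in>V" "\<And>r x. x\<in>V \<Longrightarrow> r *\<^sub>R x \<in> V"
    "\<And>c x. x\<in>V \<Longrightarrow> sc c x \<in> V"
  shows "csubspace sc V"
  unfolding csubspace_def subspace_def using assms by blast

lemma csubspaceD:
  assumes "csubspace sc V"
  shows "0 \<in> V" "x\<in>V \<Longrightarrow> y\<in>V \<Longrightarrow> x+y\<in>V" "x\<in>V \<Longrightarrow> r *\<^sub>R x \<in> V"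
    "x\<in>V \<Longrightarrow> sc c x \<in> V" "x\<in>V \<Longrightarrow> - x \<in> V" "x\<in>V \<Longrightarrow> y\<in>V \<Longrightarrow> x-y\<in>V"
  using assms unfolding csubspace_def
  by (auto intro: subspace_0 subspace_add subspace_scale subspace_neg subspace_diff)

lemma csubspace_UNIV: "csubspace sc UNIV" by (rule csubspaceI) auto

lemma csubspace_Inter: "(\<And>V. V \<in> S \<Longrightarrow> csubspace sc V) \<Longrightarrow> csubspace sc (\<Inter>S)"
  by (rule csubspaceI) (auto dest: csubspaceD)

lemma cspan_csubspace: "csubspace sc (cspan sc A)"
  unfolding cspan_def by (rule csubspace_Inter) auto

lemma cspan_superset: "A \<subseteq> cspan sc A"
  unfolding cspan_def by auto

lemma cspan_least: "csubspace sc V \<Longrightarrow> A \<subseteq> V \<Longrightarrow> cspan sc A \<subseteq> V"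
  unfolding cspan_def by auto

lemma cspan_mono: "A \<subseteq> B \<Longrightarrow> cspan sc A \<subseteq> cspan sc B"
  by (meson cspan_csubspace cspan_least cspan_superset subset_trans)

lemma csubspace_closure:
  assumes cs: "complex_structure sc" and V: "csubspace sc V"
  shows "csubspace sc (closure V)"
proof (rule csubspaceI)
  show "0 \<in> closure V" using csubspaceD(1)[OF V] closure_subset by blast
next
  fix x y assume "x \<in> closure V" "y \<in> closure V"
  then obtain u v where u: "\<And>n. u n \<in> V" "u \<longlonglongrightarrow> x" and v: "\<And>n. v n \<in> V" "v \<longlonglongrightarrow> y"
    unfolding closure_sequential by blast
  have "(\<lambda>n. u n + v n) \<longlonglongrightarrow> x + y" using u v by (intro tendsto_add)
  moreover have "\<And>n. u n + v n \<in> V" using u v csubspaceD(2)[OF V] by blast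
  ultimately show "x + y \<in> closure V" unfolding closure_sequential
    by (intro exI[where x="\<lambda>n. u n + v n"]) auto
next
  fix r x assume "x \<in> closure V"
  then obtain u where u: "\<And>n. u n \<in> V" "u \<longlonglongrightarrow> x" unfolding closure_sequential by blast
  have "(\<lambda>n. r *\<^sub>R u n) \<longlonglongrightarrow> r *\<^sub>R x" using u by (intro tendsto_scaleR) auto
  moreover have "\<And>n. r *\<^sub>R u n \<in> V" using u csubspaceD(3)[OF V] by blast
  ultimately show "r *\<^sub>R x \<in> closure V" unfolding closure_sequential
    by (intro exI[where x="\<lambda>n. r *\<^sub>R u n"]) auto
next
  fix c x assume "x \<in> closure V"
  then obtain u where u: "\<And>n. u n \<in> V" "u \<longlonglongrightarrow> x" unfolding closure_sequential by blast
  have "(\<lambda>n. sc c (u n)) \<longlonglongrightarrow> sc c x" using u bounded_linear.tendsto[OF cs_bl[OF cs]] by blast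
  moreover have "\<And>n. sc c (u n) \<in> V" using u csubspaceD(4)[OF V] by blast
  ultimately show "sc c x \<in> closure V" unfolding closure_sequential
    by (intro exI[where x="\<lambda>n. sc c (u n)"]) auto
qed

lemma join_closed: "closed (join sc S)" unfolding join_def by simp

lemma join_csubspace: "complex_structure sc \<Longrightarrow> csubspace sc (join sc S)"
  unfolding join_def by (intro csubspace_closure cspan_csubspace)

lemma join_least: "closed V \<Longrightarrow> csubspace sc V \<Longrightarrow> \<Union>S \<subseteq> V \<Longrightarrow> join sc S \<subseteq> V"
  unfolding join_def by (meson closure_minimal cspan_least)

lemma join_upper: "E \<in> S \<Longrightarrow> E \<subseteq> join sc S"
  unfolding join_def using cspan_superset closure_subset by blast

lemma nestD:
  assumes "nest sc \<E>"
  shows "E \<in> \<E> \<Longrightarrow> closed E" "E \<in> \<E> \<Longrightarrow> csubspace sc E"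
    "E \<in> \<E> \<Longrightarrow> F \<in> \<E> \<Longrightarrow> E \<subseteq> F \<or> F \<subseteq> E" "{0} \<in> \<E>" "UNIV \<in> \<E>"
    "S \<subseteq> \<E> \<Longrightarrow> \<Inter>S \<in> \<E>" "S \<subseteq> \<E> \<Longrightarrow> join sc S \<in> \<E>"
  using assms unfolding nest_def by blast+

lemma bclo_facts:
  assumes "bounded_clinear_op sc T"
  shows "bounded_linear T" "T (sc c x) = sc c (T x)" "T (x+y) = T x + T y" "T (r *\<^sub>R x) = r *\<^sub>R T x"
    "T 0 = 0"
  using assms unfolding bounded_clinear_op_def
  by (auto simp: linear_add linear_scale linear_0 bounded_linear.linear)

lemma vimage_csubspace:
  assumes T: "bounded_clinear_op sc T" and V: "csubspace sc V"
  shows "csubspace sc (T -` V)"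
  by (rule csubspaceI) (auto simp: bclo_facts[OF T] intro: csubspaceD[OF V])

lemma vimage_closed:
  assumes T: "bounded_clinear_op sc T" and V: "closed V"
  shows "closed (T -` V)"
  using bclo_facts(1)[OF T] V
  by (intro continuous_closed_vimage linear_continuous_at) auto

lemma image_csubspace:
  assumes T: "bounded_clinear_op sc T" and V: "csubspace sc V"
  shows "csubspace sc (T ` V)"
proof (rule csubspaceI)
  show "0 \<in> T ` V" using bclo_facts(5)[OF T] csubspaceD(1)[OF V] by (metis image_eqI)
next
  fix x y assume "x \<in> T ` V" "y \<in> T ` V"
  then obtain a b where "a\<in>V" "b\<in>V" "x = T a" "y = T b" by blast
  thus "x + y \<in> T ` V" using bclo_facts(3)[OF T] csubspaceD(2)[OF V] by (metis image_eqI)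
next
  fix r x assume "x \<in> T ` V"
  then obtain a where "a\<in>V" "x = T a" by blast
  thus "r *\<^sub>R x \<in> T ` V" using bclo_facts(4)[OF T] csubspaceD(3)[OF V] by (metis image_eqI)
next
  fix c x assume "x \<in> T ` V"
  then obtain a where "a\<in>V" "x = T a" by blast
  thus "sc c x \<in> T ` V" using bclo_facts(2)[OF T] csubspaceD(4)[OF V] by (metis image_eqI)
qed

lemma image_cspan:
  assumes T: "bounded_clinear_op sc T"
  shows "T ` cspan sc A \<subseteq> cspan sc (T ` A)"
proof -
  have "cspan sc A \<subseteq> T -` cspan sc (T ` A)"
    by (rule cspan_least[OF vimage_csubspace[OF T cspan_csubspace]]) (use cspan_superset in blast)
  thus ?thesis by blast
qed

lemma rank_one:
  fixes sc :: "complex \<Rightarrow> 'a::banach \<Rightarrow> 'a"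
  assumes cs: "complex_structure sc" and N: "nest sc \<E>" and F: "F \<in> \<E>" and xF: "x \<notin> F"
    and hy: "\<forall>F'\<in>\<E>. F' \<subseteq> F \<or> y \<in> F'"
  shows "\<exists>A\<in>nest_alg sc \<E>. A x = y"
proof -
  obtain f :: "'a \<Rightarrow> complex" where fadd: "\<And>a b. f (a+b) = f a + f b" and fsc: "\<And>c a. f (sc c a) = c * f a"
    and fF: "\<And>z. z\<in>F \<Longrightarrow> f z = 0" and fx: "f x \<noteq> 0" and fb: "\<And>z. cmod (f z) \<le> 2 * norm z"
    using complex_HB[OF cs nestD(1)[OF N F] nestD(2)[OF N F] xF] by blast
  define A where "A z = sc (f z / f x) y" for z
  have fr: "f (r *\<^sub>R a) = complex_of_real r * f a" for r a
    using fsc[of "complex_of_real r" a] cs_real[OF cs] by simp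
  have bl: "bounded_linear A"
  proof (rule bounded_linear_intro[where K="2 * norm y / cmod (f x)"])
    fix a b show "A (a + b) = A a + A b" unfolding A_def using cs by (simp add: fadd add_divide_distrib cs_addl)
  next
    fix r a
    have "complex_of_real r * f a / f x = complex_of_real r * (f a / f x)" by simp
    hence "A (r *\<^sub>R a) = sc (complex_of_real r) (sc (f a / f x) y)" unfolding A_def using cs
      by (simp add: fr cs_mult)
    thus "A (r *\<^sub>R a) = r *\<^sub>R A a" unfolding A_def using cs by (simp add: cs_real)
  next
    fix a
    have "norm (A a) = cmod (f a) / cmod (f x) * norm y" unfolding A_def using cs by (simp add: cs_norm norm_divide)
    also have "\<dots> \<le> 2 * norm a / cmod (f x) * norm y"
      using fb[of a] fx by (intro mult_right_mono divide_right_mono) auto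
    finally show "norm (A a) \<le> norm a * (2 * norm y / cmod (f x))" by (simp add: field_simps)
  qed
  have "bounded_clinear_op sc A" unfolding bounded_clinear_op_def
  proof (intro conjI allI bl)
    fix c z show "A (sc c z) = sc c (A z)" unfolding A_def using cs by (simp add: fsc cs_mult)
  qed
  moreover have "A ` E \<subseteq> E" if E: "E \<in> \<E>" for E
  proof
    fix w assume "w \<in> A ` E"
    then obtain z where z: "z \<in> E" "w = A z" by blast
    show "w \<in> E"
    proof (cases "E \<subseteq> F")
      case True
      hence "f z = 0" using fF z by blast
      hence "A z = 0" unfolding A_def using cs by (simp add: cs_zero_left)
      thus ?thesis using z csubspaceD(1)[OF nestD(2)[OF N E]] by simp
    next
      case False
      hence "y \<in> E" using hy E by blast
      thus ?thesis unfolding z A_def by (rule csubspaceD(4)[OF nestD(2)[OF N E]])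
    qed
  qed
  ultimately have "A \<in> nest_alg sc \<E>" unfolding nest_alg_def by blast
  moreover have "A x = y" unfolding A_def using fx cs by (simp add: cs_one)
  ultimately show ?thesis by blast
qed

lemma lat_alg_in_nest:
  fixes sc :: "complex \<Rightarrow> 'a::banach \<Rightarrow> 'a"
  assumes cs: "complex_structure sc" and N: "nest sc \<E>" and cM: "closed M" and sM: "csubspace sc M"
    and inv: "\<And>A. A \<in> nest_alg sc \<E> \<Longrightarrow> A ` M \<subseteq> M"
  shows "M \<in> \<E>"
proof -
  have key: "y \<in> M" if h1: "F \<in> \<E>" and h2: "x \<notin> F" and h3: "x \<in> M" and h4: "\<forall>F'\<in>\<E>. F' \<subseteq> F \<or> y \<in> F'" for F x y
  proof -
    obtain A where "A \<in> nest_alg sc \<E>" "A x = y" using rank_one[OF cs N h1 h2 h4] by blast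
    thus ?thesis using inv h3 by blast
  qed
  define K where "K = \<Inter>{F\<in>\<E>. M \<subseteq> F}"
  have "{F\<in>\<E>. M \<subseteq> F} \<subseteq> \<E>" by (rule Collect_subset)
  hence KE: "K \<in> \<E>" unfolding K_def by (rule nestD(6)[OF N])
  have MK: "M \<subseteq> K" unfolding K_def by blast
  define Km where "Km = join sc {F\<in>\<E>. F \<subset> K}"
  have "{F\<in>\<E>. F \<subset> K} \<subseteq> \<E>" by (rule Collect_subset)
  hence KmE: "Km \<in> \<E>" unfolding Km_def by (rule nestD(7)[OF N])
  have KmK: "Km \<subseteq> K" unfolding Km_def
    by (rule join_least[OF nestD(1)[OF N KE] nestD(2)[OF N KE]]) blast
  have "K \<subseteq> M"
  proof (cases "M \<subseteq> Km")
    case True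
    hence "Km \<in> {F\<in>\<E>. M \<subseteq> F}" using KmE by simp
    hence "K \<subseteq> Km" unfolding K_def by (rule Inter_lower)
    have "F \<subseteq> M" if F: "F \<in> \<E>" "F \<subset> K" for F
    proof -
      have "\<not> M \<subseteq> F"
      proof
        assume "M \<subseteq> F"
        hence "F \<in> {F\<in>\<E>. M \<subseteq> F}" using F(1) by simp
        hence "K \<subseteq> F" unfolding K_def by (rule Inter_lower)
        thus False using F(2) by simp
      qed
      then obtain x where x: "x \<in> M" "x \<notin> F" by blast
      show ?thesis
      proof
        fix y assume "y \<in> F"
        have "\<forall>F'\<in>\<E>. F' \<subseteq> F \<or> y \<in> F'" using nestD(3)[OF N F(1)] \<open>y\<in>F\<close> by blast
        thus "y \<in> M" using key[OF F(1) x(2) x(1)] by blast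
      qed
    qed
    hence "Km \<subseteq> M" unfolding Km_def by (intro join_least[OF cM sM]) blast
    thus ?thesis using \<open>K \<subseteq> Km\<close> by blast
  next
    case False
    then obtain x where x: "x \<in> M" "x \<notin> Km" by blast
    show ?thesis
    proof
      fix y assume "y \<in> K"
      have "\<forall>F'\<in>\<E>. F' \<subseteq> Km \<or> y \<in> F'"
      proof
        fix F' assume F': "F' \<in> \<E>"
        show "F' \<subseteq> Km \<or> y \<in> F'"
        proof (cases "F' \<subset> K")
          case True
          hence "F' \<in> {F\<in>\<E>. F \<subset> K}" using F' by simp
          hence "F' \<subseteq> join sc {F\<in>\<E>. F \<subset> K}" by (rule join_upper)
          thus ?thesis unfolding Km_def by (rule disjI1)
        next
          case False
          have "F' \<subseteq> K \<or> K \<subseteq> F'" using nestD(3)[OF N F' KE] .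
          hence "K \<subseteq> F'" using False by auto
          thus ?thesis using \<open>y \<in> K\<close> by auto
        qed
      qed
      thus "y \<in> M" using key[OF KmE x(2) x(1)] by blast
    qed
  qed
  hence "M = K" using MK by blast
  thus ?thesis using KE by simp
qed

lemma cspan_insert:
  assumes cs: "complex_structure sc"
  shows "cspan sc (insert h S) \<subseteq> {sc c h + w | c w. w \<in> cspan sc S}"
proof (rule cspan_least)
  let ?R = "{sc c h + w | c w. w \<in> cspan sc S}"
  have C: "csubspace sc (cspan sc S)" by (rule cspan_csubspace)
  show "csubspace sc ?R"
  proof (rule csubspaceI)
    have "0 = sc 0 h + 0" using cs_zero_left[OF cs, of h] by simp
    thus "0 \<in> ?R" using csubspaceD(1)[OF C] by blast
  next
    fix x y assume "x \<in> ?R" "y \<in> ?R"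
    then obtain c w d v where e: "x = sc c h + w" "w \<in> cspan sc S" "y = sc d h + v" "v \<in> cspan sc S" by blast
    have "x + y = sc (c + d) h + (w + v)" unfolding e using cs by (simp add: cs_addl algebra_simps)
    moreover have "w + v \<in> cspan sc S" using csubspaceD(2)[OF C e(2) e(4)] .
    ultimately show "x + y \<in> ?R" by blast
  next
    fix r x assume "x \<in> ?R"
    then obtain c w where e: "x = sc c h + w" "w \<in> cspan sc S" by blast
    have "r *\<^sub>R sc c h = sc (complex_of_real r) (sc c h)" using cs by (simp add: cs_real)
    hence "r *\<^sub>R x = sc (complex_of_real r * c) h + r *\<^sub>R w"
      unfolding e using cs by (simp add: scaleR_add_right cs_mult)
    moreover have "r *\<^sub>R w \<in> cspan sc S" using csubspaceD(3)[OF C e(2)] .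
    ultimately show "r *\<^sub>R x \<in> ?R" by blast
  next
    fix d x assume "x \<in> ?R"
    then obtain c w where e: "x = sc c h + w" "w \<in> cspan sc S" by blast
    have "sc d x = sc (d * c) h + sc d w"
      unfolding e using cs by (simp add: cs_add cs_mult)
    moreover have "sc d w \<in> cspan sc S" using csubspaceD(4)[OF C e(2)] .
    ultimately show "sc d x \<in> ?R" by blast
  qed
  show "insert h S \<subseteq> ?R"
  proof
    fix z assume "z \<in> insert h S"
    then consider "z = h" | "z \<in> S" by blast
    thus "z \<in> ?R"
    proof cases
      case 1
      have "h = sc 1 h + 0" using cs by (simp add: cs_one)
      thus ?thesis using 1 csubspaceD(1)[OF C] by blast
    next
      case 2
      have "z = sc 0 h + z" using cs by (simp add: cs_zero_left)
      thus ?thesis using 2 cspan_superset by blast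
    qed
  qed
qed

lemma fin_rel:
  assumes cs: "complex_structure sc" and H: "finite H"
  shows "M \<subseteq> cspan sc (H \<union> L) \<Longrightarrow> \<exists>F. finite F \<and> F \<subseteq> M \<and> M \<subseteq> cspan sc (F \<union> L)"
  using H
proof (induction H arbitrary: L rule: finite_induct)
  case empty thus ?case by (intro exI[of _ "{}"]) auto
next
  case (insert h H L)
  show ?case
  proof (cases "M \<subseteq> cspan sc (H \<union> L)")
    case True thus ?thesis by (rule insert.IH)
  next
    case False
    then obtain m where m: "m \<in> M" "m \<notin> cspan sc (H \<union> L)" by blast
    have "m \<in> cspan sc (insert h (H \<union> L))" using m(1) insert.prems by auto
    hence "m \<in> {sc c h + w | c w. w \<in> cspan sc (H \<union> L)}" by (rule subsetD[OF cspan_insert[OF cs]])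
    then obtain c w where cw: "m = sc c h + w" "w \<in> cspan sc (H \<union> L)" by blast
    have c0: "c \<noteq> 0"
    proof
      assume "c = 0"
      hence "m = w" using cw(1) cs_zero_left[OF cs, of h] by simp
      thus False using m(2) cw(2) by simp
    qed
    have hm: "h = sc (1/c) (m - w)" using cs c0 by (simp add: cw cs_mult cs_one)
    have sup: "H \<union> insert m L \<subseteq> cspan sc (H \<union> insert m L)" by (rule cspan_superset)
    have sub: "H \<union> L \<subseteq> cspan sc (H \<union> insert m L)" using sup by blast
    have "cspan sc (H \<union> L) \<subseteq> cspan sc (H \<union> insert m L)" by (rule cspan_mono) blast
    hence wS: "w \<in> cspan sc (H \<union> insert m L)" using cw(2) by blast
    have mS: "m \<in> cspan sc (H \<union> insert m L)" using sup by blast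
    have "m - w \<in> cspan sc (H \<union> insert m L)" by (rule csubspaceD(6)[OF cspan_csubspace mS wS])
    hence "h \<in> cspan sc (H \<union> insert m L)" unfolding hm by (rule csubspaceD(4)[OF cspan_csubspace])
    hence "insert h (H \<union> L) \<subseteq> cspan sc (H \<union> insert m L)" using sub by blast
    hence "cspan sc (insert h (H \<union> L)) \<subseteq> cspan sc (H \<union> insert m L)"
      by (rule cspan_least[OF cspan_csubspace])
    moreover have "M \<subseteq> cspan sc (insert h (H \<union> L))" using insert.prems by simp
    ultimately have Msub: "M \<subseteq> cspan sc (H \<union> insert m L)" by (rule subset_trans[rotated])
    obtain F where F: "finite F" "F \<subseteq> M" "M \<subseteq> cspan sc (F \<union> insert m L)"
      using insert.IH[OF Msub] by blast
    have "F \<union> insert m L = insert m F \<union> L" by blast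
    hence "M \<subseteq> cspan sc (insert m F \<union> L)" using F(3) by simp
    moreover have "finite (insert m F)" "insert m F \<subseteq> M" using F m(1) by auto
    ultimately show ?thesis by blast
  qed
qed

lemma qdim_fin_iff: "qdim sc M L < \<infinity> \<longleftrightarrow> (\<exists>F. finite F \<and> F \<subseteq> M \<and> M \<subseteq> cspan sc (F \<union> L))"
  unfolding qdim_def by auto

lemma qdim_fin_I: "complex_structure sc \<Longrightarrow> finite H \<Longrightarrow> M \<subseteq> cspan sc (H \<union> L) \<Longrightarrow> qdim sc M L < \<infinity>"
  unfolding qdim_fin_iff by (rule fin_rel)

lemma qdim_zero: "M \<subseteq> L \<Longrightarrow> qdim sc M L = 0"
proof -
  assume hML: "M \<subseteq> L"
  have P: "\<exists>F. finite F \<and> F \<subseteq> M \<and> M \<subseteq> cspan sc (F \<union> L) \<and> card F = 0"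
    using hML cspan_superset by (intro exI[of _ "{}"]) auto
  hence "\<exists>F. finite F \<and> F \<subseteq> M \<and> M \<subseteq> cspan sc (F \<union> L)" by blast
  thus ?thesis unfolding qdim_def using Least_eq_0[where P="\<lambda>n. \<exists>F. finite F \<and> F \<subseteq> M \<and> M \<subseteq> cspan sc (F \<union> L) \<and> card F = n", OF P]
    by (simp add: zero_enat_def)
qed

theorem mainTheorem14:
  fixes sc :: "complex \<Rightarrow> 'a::banach \<Rightarrow> 'a"
    and \<E> :: "'a set set"
    and J :: "('a \<Rightarrow> 'a) set"
  assumes "complex_structure sc"
    and "nest sc \<E>"
    and "bimodule sc \<E> J"
  shows "admissible_sf_pair sc \<E> (Phi_J sc J) (Phi_e_J sc \<E> J)"
proof -
  note cs = assms(1) and N = assms(2) and B = assms(3)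
  have Jop: "bounded_clinear_op sc T" if "T \<in> J" for T using B that unfolding bimodule_def by blast
  have Jz: "(\<lambda>x. 0) \<in> J" using B unfolding bimodule_def by blast
  have Jl: "A \<circ> T \<in> J" if "A \<in> nest_alg sc \<E>" "T \<in> J" for A T using B that unfolding bimodule_def by blast
  define \<Phi> where "\<Phi> = Phi_J sc J"
  define \<Psi> where "\<Psi> = Phi_e_J sc \<E> J"
  define fam where "fam N = {L\<in>\<E>. \<forall>T\<in>J. qdim sc (T ` N) L < \<infinity>}" for N
  have \<Psi>_def': "\<Psi> N = \<Inter>(fam N)" for N unfolding \<Psi>_def Phi_e_J_def fam_def by simp
  define S where "S E = {T x | T x. T \<in> J \<and> x \<in> E}" for E
  have \<Phi>_def': "\<Phi> E = closure (cspan sc (S E))" for E unfolding \<Phi>_def Phi_J_def S_def by simp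
  have \<Phi>cl: "closed (\<Phi> E)" for E unfolding \<Phi>_def' by simp
  have \<Phi>cs: "csubspace sc (\<Phi> E)" for E unfolding \<Phi>_def' by (intro csubspace_closure[OF cs] cspan_csubspace)
  have S\<Phi>: "S E \<subseteq> \<Phi> E" for E unfolding \<Phi>_def' using cspan_superset closure_subset by blast
  have T\<Phi>: "T ` E \<subseteq> \<Phi> E" if "T \<in> J" for T E using S\<Phi>[of E] that unfolding S_def by blast
  have \<Phi>least: "\<Phi> E \<subseteq> V" if "closed V" "csubspace sc V" "S E \<subseteq> V" for E V
    unfolding \<Phi>_def' by (meson closure_minimal cspan_least that)
  have \<Phi>mono: "\<Phi> E \<subseteq> \<Phi> F" if "E \<subseteq> F" for E F
    unfolding \<Phi>_def' using that unfolding S_def by (intro closure_mono cspan_mono) blast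
  have \<Phi>E: "\<Phi> E \<in> \<E>" for E
  proof (rule lat_alg_in_nest[OF cs N \<Phi>cl \<Phi>cs])
    fix A assume A: "A \<in> nest_alg sc \<E>"
    have Aop: "bounded_clinear_op sc A" using A unfolding nest_alg_def by blast
    have "S E \<subseteq> A -` \<Phi> E"
    proof
      fix y assume "y \<in> S E"
      then obtain T x where y: "y = T x" "T \<in> J" "x \<in> E" unfolding S_def by blast
      have "A \<circ> T \<in> J" using Jl[OF A y(2)] .
      moreover have "A y = (A \<circ> T) x" using y by simp
      ultimately have "A y \<in> S E" unfolding S_def using y(3) by blast
      thus "y \<in> A -` \<Phi> E" using S\<Phi> by blast
    qed
    hence "\<Phi> E \<subseteq> A -` \<Phi> E"
      by (intro \<Phi>least vimage_closed[OF Aop \<Phi>cl] vimage_csubspace[OF Aop \<Phi>cs])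
    thus "A ` \<Phi> E \<subseteq> \<Phi> E" by blast
  qed
  have sfPhi: "support_function \<E> \<Phi>" unfolding support_function_def using \<Phi>E \<Phi>mono by blast
  have joinPhi: "join sc (\<Phi> ` {E\<in>\<E>. E \<subset> N}) = \<Phi> (minus_elem sc \<E> N)" for N
  proof
    let ?M = "minus_elem sc \<E> N"
    show "join sc (\<Phi> ` {E\<in>\<E>. E \<subset> N}) \<subseteq> \<Phi> ?M"
    proof (rule join_least[OF \<Phi>cl \<Phi>cs])
      show "\<Union>(\<Phi> ` {E\<in>\<E>. E \<subset> N}) \<subseteq> \<Phi> ?M"
      proof
        fix z assume "z \<in> \<Union>(\<Phi> ` {E\<in>\<E>. E \<subset> N})"
        then obtain E where E: "E \<in> {E\<in>\<E>. E \<subset> N}" "z \<in> \<Phi> E" by blast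
        have "E \<subseteq> ?M" unfolding minus_elem_def using E(1) by (rule join_upper)
        thus "z \<in> \<Phi> ?M" using \<Phi>mono E(2) by blast
      qed
    qed
  next
    let ?M = "minus_elem sc \<E> N"
    let ?R = "join sc (\<Phi> ` {E\<in>\<E>. E \<subset> N})"
    have Rcl: "closed ?R" by (rule join_closed)
    have Rcs: "csubspace sc ?R" by (rule join_csubspace[OF cs])
    have "S ?M \<subseteq> ?R"
    proof
      fix y assume "y \<in> S ?M"
      then obtain T x where y: "y = T x" "T \<in> J" "x \<in> ?M" unfolding S_def by blast
      have Top: "bounded_clinear_op sc T" using Jop[OF y(2)] .
      have "\<Union>{E\<in>\<E>. E \<subset> N} \<subseteq> T -` ?R"
      proof
        fix u assume "u \<in> \<Union>{E\<in>\<E>. E \<subset> N}"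
        then obtain E where E: "E \<in> {E\<in>\<E>. E \<subset> N}" "u \<in> E" by blast
        have "T u \<in> \<Phi> E" using T\<Phi>[OF y(2), of E] E(2) by blast
        moreover have "\<Phi> E \<in> \<Phi> ` {E\<in>\<E>. E \<subset> N}" using E(1) by (rule imageI)
        hence "\<Phi> E \<subseteq> ?R" by (rule join_upper)
        ultimately show "u \<in> T -` ?R" by blast
      qed
      hence "?M \<subseteq> T -` ?R" unfolding minus_elem_def
        by (intro join_least vimage_closed[OF Top Rcl] vimage_csubspace[OF Top Rcs])
      thus "y \<in> ?R" using y by blast
    qed
    thus "\<Phi> ?M \<subseteq> ?R" by (rule \<Phi>least[OF Rcl Rcs])
  qed
  have admPhi: "admissible_sf sc \<E> \<Phi>" unfolding admissible_sf_def using sfPhi joinPhi by blast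
  have Phi0: "\<Phi> {0} = {0}"
  proof
    have "S {0} \<subseteq> {0}" unfolding S_def using Jop bclo_facts(5) by blast
    moreover have "csubspace sc {0}" using cs by (intro csubspaceI) (auto simp: cs_zero)
    ultimately show "\<Phi> {0} \<subseteq> {0}" by (intro \<Phi>least) auto
  next
    show "{0} \<subseteq> \<Phi> {0}" using csubspaceD(1)[OF \<Phi>cs] by blast
  qed
  have famE: "fam N \<subseteq> \<E>" for N unfolding fam_def by blast
  have \<Psi>E: "\<Psi> N \<in> \<E>" for N unfolding \<Psi>_def' by (rule nestD(6)[OF N famE])
  have fam_anti: "fam N' \<subseteq> fam N" if "N \<subseteq> N'" for N N'
  proof
    fix L assume L: "L \<in> fam N'"
    have "qdim sc (T ` N) L < \<infinity>" if T: "T \<in> J" for T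
    proof -
      have "qdim sc (T ` N') L < \<infinity>" using L T unfolding fam_def by blast
      then obtain F where F: "finite F" "F \<subseteq> T ` N'" "T ` N' \<subseteq> cspan sc (F \<union> L)"
        unfolding qdim_fin_iff by blast
      have "T ` N \<subseteq> cspan sc (F \<union> L)" using F(3) \<open>N \<subseteq> N'\<close> by blast
      thus ?thesis by (rule qdim_fin_I[OF cs F(1)])
    qed
    thus "L \<in> fam N" using L unfolding fam_def by blast
  qed
  have \<Psi>mono: "\<Psi> N \<subseteq> \<Psi> N'" if "N \<subseteq> N'" for N N'
    unfolding \<Psi>_def' using fam_anti[OF that] by (rule Inter_anti_mono)
  have \<Phi>fam: "\<Phi> N \<in> fam N" for N
  proof -
    have "qdim sc (T ` N) (\<Phi> N) < \<infinity>" if T: "T \<in> J" for T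
    proof (rule qdim_fin_I[OF cs finite.emptyI])
      have "T ` N \<subseteq> \<Phi> N" by (rule T\<Phi>[OF T])
      also have "\<Phi> N \<subseteq> cspan sc ({} \<union> \<Phi> N)" using cspan_superset by simp
      finally show "T ` N \<subseteq> cspan sc ({} \<union> \<Phi> N)" .
    qed
    thus ?thesis unfolding fam_def using \<Phi>E by blast
  qed
  have \<Psi>le: "\<Psi> N \<subseteq> \<Phi> N" for N unfolding \<Psi>_def' using \<Phi>fam by (rule Inter_lower)
  have keyEf: "\<Psi> N \<noteq> L0" if L0: "L0 \<in> fam N" "L0 \<in> E_f sc \<E>" for N L0
  proof -
    let ?m = "minus_elem sc \<E> L0"
    have L0E: "L0 \<in> \<E>" using L0(1) famE by blast
    have mE: "?m \<in> \<E>" unfolding minus_elem_def by (rule nestD(7)[OF N]) blast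
    have qf: "qdim sc L0 ?m < \<infinity>" and qp: "0 < qdim sc L0 ?m" using L0(2) unfolding E_f_def by blast+
    obtain G where G: "finite G" "L0 \<subseteq> cspan sc (G \<union> ?m)" using qf unfolding qdim_fin_iff by blast
    have "qdim sc (T ` N) ?m < \<infinity>" if T: "T \<in> J" for T
    proof -
      have "qdim sc (T ` N) L0 < \<infinity>" using L0(1) T unfolding fam_def by blast
      then obtain F where F: "finite F" "T ` N \<subseteq> cspan sc (F \<union> L0)"
        unfolding qdim_fin_iff by blast
      have "F \<union> L0 \<subseteq> cspan sc ((F \<union> G) \<union> ?m)"
      proof -
        have "(F \<union> G) \<union> ?m \<subseteq> cspan sc ((F \<union> G) \<union> ?m)" by (rule cspan_superset)
        hence "F \<subseteq> cspan sc ((F \<union> G) \<union> ?m)" by blast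
        moreover have "cspan sc (G \<union> ?m) \<subseteq> cspan sc ((F \<union> G) \<union> ?m)" by (rule cspan_mono) blast
        ultimately show ?thesis using G(2) by blast
      qed
      hence "cspan sc (F \<union> L0) \<subseteq> cspan sc ((F \<union> G) \<union> ?m)" by (rule cspan_least[OF cspan_csubspace])
      hence "T ` N \<subseteq> cspan sc ((F \<union> G) \<union> ?m)" using F(2) by blast
      moreover have "finite (F \<union> G)" using F(1) G(1) by simp
      ultimately show ?thesis using qdim_fin_I[OF cs] by blast
    qed
    hence "?m \<in> fam N" unfolding fam_def using mE by blast
    hence "\<Psi> N \<subseteq> ?m" unfolding \<Psi>_def' by (rule Inter_lower)
    moreover have "\<not> L0 \<subseteq> ?m"
    proof
      assume "L0 \<subseteq> ?m"
      hence "qdim sc L0 ?m = 0" by (rule qdim_zero)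
      thus False using qp by simp
    qed
    ultimately show ?thesis by blast
  qed
  have essA: "\<Psi> N = plus_elem \<E> (\<Psi> N)" if "\<Psi> N \<in> E_f sc \<E>" for N
  proof (cases "\<Psi> N \<in> fam N")
    case True thus ?thesis using keyEf[OF True that] by simp
  next
    case False
    have "plus_elem \<E> (\<Psi> N) \<subseteq> L" if L: "L \<in> fam N" for L
    proof -
      have "\<Psi> N \<subseteq> L" unfolding \<Psi>_def' using L by (rule Inter_lower)
      moreover have "\<Psi> N \<noteq> L" using False L by blast
      ultimately have "L \<in> {F\<in>\<E>. \<Psi> N \<subset> F}" using L famE by blast
      thus ?thesis unfolding plus_elem_def by (rule Inter_lower)
    qed
    hence "plus_elem \<E> (\<Psi> N) \<subseteq> \<Psi> N" unfolding \<Psi>_def'[of N] by (rule Inter_greatest)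
    moreover have "\<Psi> N \<subseteq> plus_elem \<E> (\<Psi> N)" unfolding plus_elem_def by blast
    ultimately show ?thesis by blast
  qed
  have essB: "\<Psi> N2 = \<Psi> N1" if N12: "N1 \<subseteq> N2" and q: "qdim sc N2 N1 < \<infinity>" for N1 N2
  proof -
    obtain G where G: "finite G" "N2 \<subseteq> cspan sc (G \<union> N1)" using q unfolding qdim_fin_iff by blast
    have "fam N1 \<subseteq> fam N2"
    proof
      fix L assume L: "L \<in> fam N1"
      have "qdim sc (T ` N2) L < \<infinity>" if T: "T \<in> J" for T
      proof -
        have Top: "bounded_clinear_op sc T" using Jop[OF T] .
        have "qdim sc (T ` N1) L < \<infinity>" using L T unfolding fam_def by blast
        then obtain F where F: "finite F" "T ` N1 \<subseteq> cspan sc (F \<union> L)"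
          unfolding qdim_fin_iff by blast
        let ?C = "cspan sc ((T ` G \<union> F) \<union> L)"
        have "T ` (G \<union> N1) \<subseteq> ?C"
        proof -
          have "(T ` G \<union> F) \<union> L \<subseteq> ?C" by (rule cspan_superset)
          hence "T ` G \<subseteq> ?C" by blast
          moreover have "cspan sc (F \<union> L) \<subseteq> ?C" by (rule cspan_mono) blast
          ultimately show ?thesis using F(2) by blast
        qed
        hence "cspan sc (T ` (G \<union> N1)) \<subseteq> ?C" by (rule cspan_least[OF cspan_csubspace])
        moreover have "T ` N2 \<subseteq> T ` cspan sc (G \<union> N1)" using G(2) by blast
        moreover have "T ` cspan sc (G \<union> N1) \<subseteq> cspan sc (T ` (G \<union> N1))" by (rule image_cspan[OF Top])
        ultimately have "T ` N2 \<subseteq> ?C" by blast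
        moreover have "finite (T ` G \<union> F)" using F(1) G(1) by simp
        ultimately show ?thesis using qdim_fin_I[OF cs] by blast
      qed
      thus "L \<in> fam N2" using L unfolding fam_def by blast
    qed
    hence "\<Psi> N2 \<subseteq> \<Psi> N1" unfolding \<Psi>_def' by (rule Inter_anti_mono)
    thus ?thesis using \<Psi>mono[OF N12] by blast
  qed
  have sfPsi: "support_function \<E> \<Psi>" unfolding support_function_def
  proof (intro conjI ballI impI)
    fix E assume "E \<in> \<E>" show "\<Psi> E \<in> \<E>" by (rule \<Psi>E)
  next
    fix E F :: "'a set" assume "E \<subseteq> F" thus "\<Psi> E \<subseteq> \<Psi> F" by (rule \<Psi>mono)
  qed
  have essPsi: "essential_sf sc \<E> \<Psi>" unfolding essential_sf_def
  proof (intro conjI ballI impI sfPsi)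
    fix N assume "\<Psi> N \<in> E_f sc \<E>" thus "\<Psi> N = plus_elem \<E> (\<Psi> N)" by (rule essA)
  next
    fix N1 N2 :: "'a set" assume "N1 \<subseteq> N2" "qdim sc N2 N1 < \<infinity>" thus "\<Psi> N2 = \<Psi> N1" by (rule essB)
  qed
  have lePsi: "sf_le \<E> \<Psi> \<Phi>" unfolding sf_le_def using \<Psi>le by blast
  have strict: "\<Psi> N \<subset> \<Phi> N" if "\<Psi> N \<in> E_f sc \<E>" for N
  proof -
    have "\<Psi> N \<noteq> \<Phi> N"
    proof
      assume eq: "\<Psi> N = \<Phi> N"
      hence "\<Phi> N \<in> E_f sc \<E>" using that by simp
      from keyEf[OF \<Phi>fam this] eq show False by simp
    qed
    thus ?thesis using \<Psi>le by blast
  qed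
  have "sf_pair sc \<E> \<Phi> \<Psi>" unfolding sf_pair_def using admPhi Phi0 essPsi lePsi by (intro conjI)
  moreover have "\<forall>N\<in>\<E>. \<Psi> N \<in> E_f sc \<E> \<longrightarrow> \<Psi> N \<subset> \<Phi> N" using strict by blast
  ultimately have "admissible_sf_pair sc \<E> \<Phi> \<Psi>" unfolding admissible_sf_pair_def by (intro conjI)
  thus ?thesis unfolding \<Phi>_def \<Psi>_def .
qed

end
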